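(* Let $K$ be a field of characteristic zero and let $F^{(y)}:K[x]\to K[x,y]$ be a $K$-linear operator. Suppose $(p_n(x))_{n\ge0}$ and $(p'_n(x))_{n\ge0}$ are two sequences of polynomials in $K[x]$ with $\deg p_n=\deg p'_n=n$ such that for all $n\ge 0$ $$F^{(y)}p_n(x)=\sum_{k=0}^np_k(x)p_{n-k}(y)\quad\text{and}\quad F^{(y)}p'_n(x)=\sum_{k=0}^np'_k(x)p'_{n-k}(y).$$ Let $\epsilon,\epsilon':K[x]\to K$ be the linear maps defined by $\epsilon p_n(x)=\delta_{n0}$ and $\epsilon' p'_n(x)=\delta_{n0}$. Then $\epsilon=\epsilon'$. *)

theory Defs
  imports "HOL-Computational_Algebra.Polynomial"
begin

text \<open>K[x,y] is represented as K[y][x], i.e. type 'a poly poly: the outer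
variable is x, the coefficients are polynomials in y.\<close>

definition const_y :: "'a::comm_ring_1 poly \<Rightarrow> 'a poly poly" where
  "const_y p = map_poly (\<lambda>c. [:c:]) p"

definition xy_prod :: "'a::comm_ring_1 poly \<Rightarrow> 'a poly \<Rightarrow> 'a poly poly" where
  "xy_prod p q = smult q (const_y p)"

definition K_linear_op :: "('a::comm_ring_1 poly \<Rightarrow> 'a poly poly) \<Rightarrow> bool" where
  "K_linear_op F \<longleftrightarrow> (\<forall>p q. F (p + q) = F p + F q) \<and>
                     (\<forall>c p. F (smult c p) = smult [:c:] (F p))"

definition K_linear_functional :: "('a::comm_ring_1 poly \<Rightarrow> 'a) \<Rightarrow> bool" where
  "K_linear_functional e \<longleftrightarrow> (\<forall>p q. e (p + q) = e p + e q) \<and>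
                              (\<forall>c p. e (smult c p) = c * e p)"

end

theory Submission
  imports Defs
begin

lemma coeff_xy_prod: "coeff (xy_prod a b) i = smult (coeff a i) b"
  unfolding xy_prod_def const_y_def
  by (simp add: coeff_map_poly mult.commute)

lemma lf_zero: "K_linear_functional e \<Longrightarrow> e 0 = 0"
  unfolding K_linear_functional_def by (metis add_cancel_right_right add_0)

lemma lf_sum: "K_linear_functional e \<Longrightarrow> e (\<Sum>k\<in>A. f k) = (\<Sum>k\<in>A. e (f k))"
  apply (induction A rule: infinite_finite_induct)
  apply (auto simp: lf_zero)
  by (simp add: K_linear_functional_def)

lemma lf_expand:
  assumes "K_linear_functional e" "degree a \<le> N"
  shows "e a = (\<Sum>i\<le>N. coeff a i * e (monom 1 i))"
proof -
  have "a = (\<Sum>i\<le>N. smult (coeff a i) (monom 1 i))"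
    using assms(2) by (simp add: smult_monom poly_as_sum_of_monoms')
  then have "e a = (\<Sum>i\<le>N. e (smult (coeff a i) (monom 1 i)))"
    using lf_sum[OF assms(1)] by metis
  then show ?thesis using assms(1) unfolding K_linear_functional_def by simp
qed

lemma span_induct:
  fixes p :: "nat \<Rightarrow> 'a::field poly"
  assumes deg: "\<And>n. degree (p n) = n" and nz: "\<And>n. p n \<noteq> 0"
    and P0: "P 0" and Padd: "\<And>f g. P f \<Longrightarrow> P g \<Longrightarrow> P (f + g)"
    and Psm: "\<And>c f. P f \<Longrightarrow> P (smult c f)" and Pb: "\<And>n. P (p n)"
  shows "P f"
proof (induction "degree f" arbitrary: f rule: less_induct)
  case less
  show ?case
  proof (cases "f = 0")
    case True then show ?thesis using P0 by simp
  next
    case False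
    define d where "d = degree f"
    define c where "c = lead_coeff f / lead_coeff (p d)"
    define g where "g = f - smult c (p d)"
    have lp: "lead_coeff (p d) \<noteq> 0" using nz by simp
    have fg: "f = g + smult c (p d)" unfolding g_def by simp
    have dg: "degree g \<le> d" unfolding g_def d_def
      by (metis deg degree_diff_le degree_smult_le order.refl)
    have lp2: "coeff (p d) d \<noteq> 0" using lp deg[of d] by simp
    have cg: "coeff g d = 0" unfolding g_def c_def using lp2 deg[of d] by (simp add: d_def)
    have "P g"
    proof (cases "g = 0")
      case True then show ?thesis using P0 by simp
    next
      case False
      then have "degree g \<noteq> d" using cg by (metis leading_coeff_0_iff)
      then have "degree g < degree f" using dg d_def by simp
      then show ?thesis using less by blast
    qed
    then show ?thesis using fg Padd Psm Pb by metis
  qed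
qed

theorem corollary1:
  fixes F :: "'a::field_char_0 poly \<Rightarrow> 'a poly poly"
    and p p' :: "nat \<Rightarrow> 'a poly"
    and e e' :: "'a poly \<Rightarrow> 'a"
  assumes "K_linear_op F"
    and "\<And>n. degree (p n) = n" and "\<And>n. p n \<noteq> 0"
    and "\<And>n. degree (p' n) = n" and "\<And>n. p' n \<noteq> 0"
    and "\<And>n. F (p n) = (\<Sum>k\<le>n. xy_prod (p k) (p (n - k)))"
    and "\<And>n. F (p' n) = (\<Sum>k\<le>n. xy_prod (p' k) (p' (n - k)))"
    and "K_linear_functional e" and "\<And>n. e (p n) = (if n = 0 then 1 else 0)"
    and "K_linear_functional e'" and "\<And>n. e' (p' n) = (if n = 0 then 1 else 0)"
  shows "e = e'"
proof -
  note lin = assms(1)[unfolded K_linear_op_def]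
  have F0: "F 0 = 0" using lin by (metis add_cancel_right_right add_0)
  have e0: "e 0 = 0" using lf_zero[OF assms(8)] .
  note el = assms(8)[unfolded K_linear_functional_def]
  have es: "e (smult c q) = c * e q" for c q using el by blast
  have step1: "map_poly e (F f) = f" for f
  proof (rule span_induct[of p, OF assms(2,3)])
    show "map_poly e (F 0) = 0" using F0 by simp
  next
    fix f g assume "map_poly e (F f) = f" "map_poly e (F g) = g"
    then show "map_poly e (F (f + g)) = f + g"
      by (intro poly_eqI) (metis lin coeff_map_poly coeff_add e0 el)
  next
    fix c f assume "map_poly e (F f) = f"
    then show "map_poly e (F (smult c f)) = smult c f"
    proof (intro poly_eqI)
      fix i
      have "coeff (F (smult c f)) i = smult c (coeff (F f) i)"
        using lin by (simp add: coeff_map_poly)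
      then show "coeff (map_poly e (F (smult c f))) i = coeff (smult c f) i"
        using \<open>map_poly e (F f) = f\<close> e0 el by (metis coeff_map_poly coeff_smult)
    qed
  next
    fix n
    show "map_poly e (F (p n)) = p n"
    proof (rule poly_eqI)
      fix j
      have "coeff (map_poly e (F (p n))) j = (\<Sum>k\<le>n. coeff (p k) j * e (p (n - k)))"
        using assms(6) e0 by (simp add: es lf_sum[OF assms(8)] coeff_map_poly coeff_sum coeff_xy_prod)
      also have "\<dots> = (\<Sum>k\<le>n. if k = n then coeff (p k) j else 0)"
        using assms(9) by (intro sum.cong) auto
      also have "\<dots> = coeff (p n) j" by simp
      finally show "coeff (map_poly e (F (p n))) j = coeff (p n) j" .
    qed
  qed
  have step2: "e (p' n) = e' (p' n)" for n
  proof -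
    define G where "G = F (p' n)"
    define N where "N = degree G + n"
    have "e' (p' n) = e' (map_poly e G)" using step1 G_def by simp
    also have "\<dots> = (\<Sum>i\<le>N. coeff (map_poly e G) i * e' (monom 1 i))"
      by (rule lf_expand[OF assms(10)]) (metis N_def map_poly_degree_leq le_add1 order_trans)
    also have "\<dots> = (\<Sum>i\<le>N. (\<Sum>k\<le>n. coeff (p' k) i * e (p' (n - k))) * e' (monom 1 i))"
      using assms(7) e0
      by (simp add: es lf_sum[OF assms(8)] G_def coeff_map_poly coeff_sum coeff_xy_prod)
    also have "\<dots> = (\<Sum>k\<le>n. e (p' (n - k)) * (\<Sum>i\<le>N. coeff (p' k) i * e' (monom 1 i)))"
      by (simp add: sum_distrib_left sum_distrib_right sum.swap[of _ "{..N}"] mult_ac)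
    also have "\<dots> = (\<Sum>k\<le>n. e (p' (n - k)) * e' (p' k))"
    proof (rule sum.cong)
      fix k assume "k \<in> {..n}"
      then have "degree (p' k) \<le> N" using assms(4) N_def by simp
      then show "e (p' (n - k)) * (\<Sum>i\<le>N. coeff (p' k) i * e' (monom 1 i)) = e (p' (n - k)) * e' (p' k)"
        using lf_expand[OF assms(10)] by metis
    qed simp
    also have "\<dots> = (\<Sum>k\<le>n. if k = 0 then e (p' n) else 0)"
      using assms(11) by (intro sum.cong) auto
    also have "\<dots> = e (p' n)" by simp
    finally show ?thesis by simp
  qed
  have "e f = e' f" for f
  proof (rule span_induct[of p', OF assms(4,5)])
    show "e 0 = e' 0" using e0 lf_zero[OF assms(10)] by simp
  next
    fix f g assume "e f = e' f" "e g = e' g"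
    then show "e (f + g) = e' (f + g)" using el assms(10)[unfolded K_linear_functional_def] by simp
  next
    fix c f assume "e f = e' f"
    then show "e (smult c f) = e' (smult c f)" using el assms(10)[unfolded K_linear_functional_def] by simp
  qed (rule step2)
  then show ?thesis by auto
qed

end
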